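(* Consider the $l$-th cycle of RPF-SFISTA, with $\mu=\mu_{l-1}$. For every iteration index $j\ge1$ generated during this cycle: (a) $L_{j-1}\le L_j$ (the sequence $\{L_j\}$ is nondecreasing); (b) $\tau_{j-1}=1+\frac{\mu A_{j-1}}{2}$, $\frac{\tau_{j-1}A_j}{a_{j-1}^2}=L_j$, $\underline M_l\le L_{j-1}\le\max\{\underline M_l,\kappa\bar L\}$, $v_j\in\nabla f(y_j)+\partial h(y_j)$, and $\|v_j\|\le\zeta_l\|y_j-\tilde x_{j-1}\|$; (c) $A_jL_j\ge\max\left\{\frac{j^2}{4},\ (1+Q_l^{-1})^{2(j-1)}\right\}$.
   Context: Setup. Let $f:\mathbb R^n\to\mathbb R$ be convex and differentiable with $\|\nabla f(z')-\nabla f(z)\|\le\bar L\|z'-z\|$ for all $z,z'\in\mathbb R^n$ (some $\bar L\ge0$). Let $h:\mathbb R^n\to(-\infty,\infty]$ be proper, lower semicontinuous and convex with domain $\mathcal H$. Let $\phi:=f+h$ be $\bar\mu$-strongly convex for some $\bar\mu>0$, with (unique) minimizer $z^*$. Write $\ell_f(u;x):=f(x)+\langle\nabla f(x),u-x\rangle$. Define $\kappa:=2\beta/(1-\chi)$. RPF-SFISTA. Parameters $\chi\in(0,1)$, $\beta>1$; inputs $\mu_0>0$, $\bar M_0>0$, $z_0\in\mathcal H$, $\hat\epsilon>0$. The method runs in cycles $l=1,2,\dots$. At the start of cycle $l$: choose $\underline M_l\in[\max\{\bar M_{l-1}/4,\bar M_0\},\bar M_{l-1}]$ (so $\underline M_1=\bar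 M_0$), set $\mu:=\mu_{l-1}$, $x_0:=z_{l-1}$, $\xi_0:=y_0:=x_0$, $A_0:=0$, $\tau_0:=1$, $L_0:=\underline M_l$. Then for $j=1,2,\dots$: (i) set $L_j:=L_{j-1}$; (ii) compute $a_{j-1}=\frac{\tau_{j-1}+\sqrt{\tau_{j-1}^2+4\tau_{j-1}A_{j-1}L_j}}{2L_j}$, $\tilde x_{j-1}=\frac{A_{j-1}y_{j-1}+a_{j-1}x_{j-1}}{A_{j-1}+a_{j-1}}$, $y_j=\arg\min_{u}\{\ell_f(u;\tilde x_{j-1})+h(u)+\frac{L_j}{2}\|u-\tilde x_{j-1}\|^2\}$; if $f(y_j)\le\ell_f(y_j;\tilde x_{j-1})+\frac{(1-\chi)L_j}{4}\|y_j-\tilde x_{j-1}\|^2$ go to (iii), otherwise replace $L_j$ by $\beta L_j$ and repeat (ii); (iii) set $\xi_j:=y_j$ if $\phi(y_j)\le\phi(\xi_{j-1})$ and $\xi_j:=\xi_{j-1}$ otherwise; $A_j:=A_{j-1}+a_{j-1}$; $\tau_j:=\tau_{j-1}+a_{j-1}\mu/2$; $s_j:=L_j(\tilde x_{j-1}-y_j)$; $x_j:=\tau_j^{-1}[\mu a_{j-1}y_j/2+\tau_{j-1}x_{j-1}-a_{j-1}s_j]$; $v_j:=\nabla f(y_j)-\nabla f(\tilde x_{j-1})+s_j$; (iv) if $\|\xi_j-x_0\|^2<\chi A_jL_j\|y_j-\tilde x_{j-1}\|^2$, the cycle ends with a restart: set $z_l:=\xi_j$, $\bar M_l:=L_j$,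 $\mu_l:=\mu/2$ and start cycle $l+1$; (v) otherwise, if $\|v_j\|\le\hat\epsilon$, stop and output $(y,v,\xi,L):=(y_j,v_j,\xi_j,L_j)$; else go to iteration $j+1$. Cycle quantities: $\zeta_l:=\bar L+\max\{\underline M_l,\kappa\bar L\}$ and $Q_l:=2\sqrt2\sqrt{\max\{\underline M_l,\kappa\bar L\}/\mu_{l-1}}$. *)

theory Defs
  imports "HOL-Analysis.Analysis"
begin

definition proper_fun :: "('a \<Rightarrow> ereal) \<Rightarrow> bool" where
  "proper_fun h \<longleftrightarrow> (\<forall>x. h x \<noteq> -\<infinity>) \<and> (\<exists>x. h x < \<infinity>)"

definition lsc_fun :: "('a::topological_space \<Rightarrow> ereal) \<Rightarrow> bool" where
  "lsc_fun h \<longleftrightarrow> (\<forall>x. h x \<le> Liminf (at x) h)"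

definition convex_ext :: "('a::real_vector \<Rightarrow> ereal) \<Rightarrow> bool" where
  "convex_ext h \<longleftrightarrow> (\<forall>x y t. 0 < t \<and> t < 1 \<longrightarrow>
     h ((1 - t) *\<^sub>R x + t *\<^sub>R y) \<le> ereal (1 - t) * h x + ereal t * h y)"

definition strongly_convex_ext :: "real \<Rightarrow> ('a::real_normed_vector \<Rightarrow> ereal) \<Rightarrow> bool" where
  "strongly_convex_ext m h \<longleftrightarrow> (\<forall>x y t. 0 < t \<and> t < 1 \<longrightarrow>
     h ((1 - t) *\<^sub>R x + t *\<^sub>R y) \<le> ereal (1 - t) * h x + ereal t * h y
        - ereal (m / 2 * t * (1 - t) * (norm (x - y))\<^sup>2))"

definition dom_fun :: "('a \<Rightarrow> ereal) \<Rightarrow> 'a set" where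
  "dom_fun h = {x. h x < \<infinity>}"

definition subdiff :: "('a::real_inner \<Rightarrow> ereal) \<Rightarrow> 'a \<Rightarrow> 'a set" where
  "subdiff h y = {g. h y < \<infinity> \<and> (\<forall>u. h u \<ge> h y + ereal (inner g (u - y)))}"

definition lin_f :: "('a::real_inner \<Rightarrow> real) \<Rightarrow> ('a \<Rightarrow> 'a) \<Rightarrow> 'a \<Rightarrow> 'a \<Rightarrow> real" where
  "lin_f f gf u x = f x + inner (gf x) (u - x)"

definition prox_obj :: "('a::real_inner \<Rightarrow> real) \<Rightarrow> ('a \<Rightarrow> 'a) \<Rightarrow> ('a \<Rightarrow> ereal) \<Rightarrow> 'a \<Rightarrow> real \<Rightarrow> 'a \<Rightarrow> ereal" where
  "prox_obj f gf h xt L u = ereal (lin_f f gf u xt + L / 2 * (norm (u - xt))\<^sup>2) + h u"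

definition prox_pt :: "('a::real_inner \<Rightarrow> real) \<Rightarrow> ('a \<Rightarrow> 'a) \<Rightarrow> ('a \<Rightarrow> ereal) \<Rightarrow> 'a \<Rightarrow> real \<Rightarrow> 'a" where
  "prox_pt f gf h xt L = (SOME y. \<forall>u. prox_obj f gf h xt L y \<le> prox_obj f gf h xt L u)"

definition acoef :: "real \<Rightarrow> real \<Rightarrow> real \<Rightarrow> real" where
  "acoef tau A L = (tau + sqrt (tau\<^sup>2 + 4 * tau * A * L)) / (2 * L)"

definition xtil :: "real \<Rightarrow> 'a::real_vector \<Rightarrow> real \<Rightarrow> 'a \<Rightarrow> 'a" where
  "xtil A y a x = (1 / (A + a)) *\<^sub>R (A *\<^sub>R y + a *\<^sub>R x)"

definition ls_ok :: "('a::real_inner \<Rightarrow> real) \<Rightarrow> ('a \<Rightarrow> 'a) \<Rightarrow> ('a \<Rightarrow> ereal) \<Rightarrow> real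
    \<Rightarrow> real \<Rightarrow> real \<Rightarrow> 'a \<Rightarrow> 'a \<Rightarrow> real \<Rightarrow> bool" where
  "ls_ok f gf h chi tau A xprev yprev M =
     (let a = acoef tau A M; xt = xtil A yprev a xprev; y = prox_pt f gf h xt M
      in f y \<le> lin_f f gf y xt + (1 - chi) * M / 4 * (norm (y - xt))\<^sup>2)"

end

theory Submission
  imports Defs
begin


lemma lsc_event:
  fixes h :: "'a::metric_space \<Rightarrow> ereal"
  assumes "lsc_fun h" "c < h x"
  shows "eventually (\<lambda>w. c < h w) (at x)"
  using assms unfolding lsc_fun_def le_Liminf_iff by blast

lemma open_superlevel:
  fixes F :: "'a::metric_space \<Rightarrow> ereal"
  assumes ev: "\<And>x c. c < F x \<Longrightarrow> eventually (\<lambda>w. c < F w) (at x)"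
  shows "open {w. c < F w}"
proof (unfold open_dist, intro ballI)
  fix x assume "x \<in> {w. c < F w}"
  then have "c < F x" by simp
  from ev[OF this] obtain d where d: "d > 0" "\<And>w. w \<noteq> x \<Longrightarrow> dist w x < d \<Longrightarrow> c < F w"
    unfolding eventually_at by auto
  show "\<exists>e>0. \<forall>y. dist y x < e \<longrightarrow> y \<in> {w. c < F w}"
    using d \<open>c < F x\<close> by (intro exI[of _ d]) (metis mem_Collect_eq)
qed

lemma compact_min:
  fixes F :: "'a::metric_space \<Rightarrow> ereal"
  assumes K: "compact K" "K \<noteq> {}" and op: "\<And>c. open {w. c < F w}"
  shows "\<exists>y\<in>K. \<forall>u\<in>K. F y \<le> F u"
proof (rule ccontr)
  assume "\<not> ?thesis"
  then have "\<forall>x\<in>K. \<exists>z\<in>K. F z < F x" by (auto simp: not_le)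
  then obtain z where z: "\<And>x. x \<in> K \<Longrightarrow> z x \<in> K \<and> F (z x) < F x" by metis
  have cov: "K \<subseteq> (\<Union>x\<in>K. {w. F (z x) < F w})" using z by blast
  obtain C where C: "C \<subseteq> K" "finite C" "K \<subseteq> (\<Union>x\<in>C. {w. F (z x) < F w})"
    using compactE_image[OF K(1) _ cov] op by metis
  have "C \<noteq> {}" using C K(2) by auto
  let ?m = "Min ((\<lambda>x. F (z x)) ` C)"
  have "?m \<in> (\<lambda>x. F (z x)) ` C" using C \<open>C \<noteq> {}\<close> by (intro Min_in) auto
  then obtain x0 where x0: "x0 \<in> C" "?m = F (z x0)" by auto
  have "z x0 \<in> K" using z x0 C by auto
  then obtain x1 where x1: "x1 \<in> C" "F (z x1) < F (z x0)" using C(3) by auto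
  have "?m \<le> F (z x1)" using x1 C by (intro Min_le) auto
  then show False using x1 x0 by auto
qed

lemma descent:
  fixes f :: "'a::euclidean_space \<Rightarrow> real"
  assumes f_grad: "\<And>z. (f has_derivative (\<lambda>d. inner (gf z) d)) (at z)"
    and f_lip: "\<And>z z'. norm (gf z' - gf z) \<le> Lbar * norm (z' - z)"
  shows "f y \<le> f x + inner (gf x) (y - x) + Lbar / 2 * (norm (y - x))\<^sup>2"
proof -
  define d where "d = y - x"
  define \<phi> where "\<phi> t = f (x + t *\<^sub>R d) - t * inner (gf x) d - Lbar / 2 * t\<^sup>2 * (norm d)\<^sup>2" for t
  have D: "(\<phi> has_real_derivative (inner (gf (x + t *\<^sub>R d)) d - inner (gf x) d - Lbar * t * (norm d)\<^sup>2)) (at t)" for t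
  proof -
    have g: "((\<lambda>t. x + t *\<^sub>R d) has_derivative (\<lambda>s. s *\<^sub>R d)) (at t)"
      by (auto intro!: derivative_eq_intros)
    have "((\<lambda>t. f (x + t *\<^sub>R d)) has_derivative (\<lambda>s. inner (gf (x + t *\<^sub>R d)) (s *\<^sub>R d))) (at t)"
      using has_derivative_compose[OF g f_grad] by (simp add: o_def)
    then have "((\<lambda>t. f (x + t *\<^sub>R d)) has_real_derivative inner (gf (x + t *\<^sub>R d)) d) (at t)"
      by (simp add: has_real_derivative_iff_has_vector_derivative has_vector_derivative_def mult.commute)
    then show ?thesis unfolding \<phi>_def
      by (auto intro!: derivative_eq_intros simp: power2_eq_square)
  qed
  have nonpos: "inner (gf (x + t *\<^sub>R d)) d - inner (gf x) d - Lbar * t * (norm d)\<^sup>2 \<le> 0" if "0 \<le> t" for t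
  proof -
    have "inner (gf (x + t *\<^sub>R d)) d - inner (gf x) d = inner (gf (x + t *\<^sub>R d) - gf x) d"
      by (simp add: inner_diff_left)
    also have "\<dots> \<le> norm (gf (x + t *\<^sub>R d) - gf x) * norm d" by (rule norm_cauchy_schwarz)
    also have "\<dots> \<le> Lbar * norm (t *\<^sub>R d) * norm d"
      using f_lip[of x "x + t *\<^sub>R d"] by (intro mult_right_mono) (auto simp: norm_minus_commute)
    also have "\<dots> = Lbar * t * (norm d)\<^sup>2" using that by (simp add: power2_eq_square)
    finally show ?thesis by simp
  qed
  have "\<phi> 1 \<le> \<phi> 0"
  proof (rule DERIV_nonpos_imp_nonincreasing[of 0 1])
    fix t :: real assume "0 \<le> t" "t \<le> 1"
    then show "\<exists>y. (\<phi> has_real_derivative y) (at t) \<and> y \<le> 0"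
      using D[of t] nonpos[of t] by blast
  qed simp
  then show ?thesis unfolding \<phi>_def d_def by (simp add: algebra_simps)
qed



lemma F_event:
  fixes h :: "'a::metric_space \<Rightarrow> ereal" and q :: "'a \<Rightarrow> real"
  assumes lsc: "lsc_fun h" and nm: "\<And>w. h w \<noteq> -\<infinity>" and cq: "continuous_on UNIV q"
    and c: "c < ereal (q x) + h x"
  shows "eventually (\<lambda>w. c < ereal (q w) + h w) (at x)"
proof (cases c)
  case MInf
  have "\<And>w. -\<infinity> < ereal (q w) + h w" using nm by (case_tac "h w") auto
  then show ?thesis using MInf by (simp add: always_eventually)
next
  case PInf
  then show ?thesis using c by simp
next
  case (real cr)
  have "ereal (cr - q x) < h x"
    using c real nm[of x] by (cases "h x") auto
  then obtain t where t: "ereal (cr - q x) < ereal t" "ereal t < h x" using ereal_dense2 by blast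
  define \<delta> where "\<delta> = t - (cr - q x)"
  have dpos: "\<delta> > 0" using t(1) by (simp add: \<delta>_def)
  have e1: "eventually (\<lambda>w. ereal t < h w) (at x)" using lsc_event[OF lsc t(2)] .
  have "(q \<longlongrightarrow> q x) (at x)" using cq by (simp add: continuous_on_def)
  then have e2: "eventually (\<lambda>w. q x - \<delta> < q w) (at x)"
    using dpos by (intro order_tendstoD) auto
  show ?thesis
  proof (rule eventually_mono[OF eventually_conj[OF e1 e2]])
    fix w assume w: "ereal t < h w \<and> q x - \<delta> < q w"
    show "c < ereal (q w) + h w"
    proof (cases "h w")
      case (real b)
      then show ?thesis using w real \<open>c = ereal cr\<close> by (simp add: \<delta>_def)
    next
      case PInf then show ?thesis using \<open>c = ereal cr\<close> by simp
    next
      case MInf then show ?thesis using nm by simp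
    qed
  qed
qed



lemma norm_sq_add: "(norm (d + e :: 'a::real_inner))\<^sup>2 = (norm d)\<^sup>2 + 2 * inner d e + (norm e)\<^sup>2"
  by (simp add: power2_norm_eq_inner inner_add_left inner_add_right inner_commute)

lemma prox_exists:
  fixes h :: "'a::euclidean_space \<Rightarrow> ereal" and f :: "'a \<Rightarrow> real"
  assumes hpr: "proper_fun h" and hl: "lsc_fun h" and hc: "convex_ext h" and Lp: "L > 0"
  shows "\<exists>y. \<forall>u. prox_obj f gf h xt L y \<le> prox_obj f gf h xt L u"
proof -
  define q where "q u = lin_f f gf u xt + L/2 * (norm (u - xt))\<^sup>2" for u
  have Fq: "prox_obj f gf h xt L u = ereal (q u) + h u" for u by (simp add: prox_obj_def q_def)
  have nm: "h w \<noteq> -\<infinity>" for w using hpr by (simp add: proper_fun_def)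
  obtain p where "h p < \<infinity>" using hpr by (auto simp: proper_fun_def)
  then obtain hp where hpd: "h p = ereal hp" using nm[of p] by (cases "h p") auto
  have cq: "continuous_on UNIV q" unfolding q_def lin_f_def by (intro continuous_intros)
  have opF: "open {w. c < ereal (q w) + h w}" for c
    by (rule open_superlevel) (rule F_event[OF hl nm cq])
  have oph: "open {w. c < h w}" for c by (rule open_superlevel) (rule lsc_event[OF hl])
  obtain w0 where w0: "w0 \<in> cball p 1" "\<forall>u\<in>cball p 1. h w0 \<le> h u"
    using compact_min[of "cball p 1" h] oph by auto
  obtain mr where mr: "\<forall>u\<in>cball p 1. ereal mr \<le> h u"
  proof (cases "h w0")
    case (real r) then show ?thesis using that[of r] w0 by auto
  next
    case PInf then show ?thesis using that[of 0] w0 by auto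
  next
    case MInf then show ?thesis using nm by auto
  qed
  have lb: "ereal (hp + norm (u - p) * (mr - hp)) \<le> h u" if r1: "norm (u - p) \<ge> 1" for u
  proof (cases "h u")
    case PInf then show ?thesis by simp
  next
    case MInf then show ?thesis using nm by simp
  next
    case (real b)
    define r where "r = norm (u - p)"
    show ?thesis
    proof (cases "r = 1")
      case True
      then have "u \<in> cball p 1" by (simp add: r_def dist_norm norm_minus_commute)
      then have "ereal mr \<le> h u" using mr by blast
      then show ?thesis using True real by (auto simp: r_def)
    next
      case False
      then have rg: "r > 1" using r1 r_def by auto
      define t where "t = 1 / r"
      have t: "0 < t" "t < 1" using rg by (auto simp: t_def)
      define w where "w = (1 - t) *\<^sub>R p + t *\<^sub>R u"
      have "w - p = t *\<^sub>R (u - p)" by (simp add: w_def algebra_simps)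
      then have "norm (w - p) = t * r" using t by (simp add: r_def)
      then have "norm (w - p) = 1" using rg by (simp add: t_def)
      then have "w \<in> cball p 1" by (simp add: dist_norm norm_minus_commute)
      then have "ereal mr \<le> h w" using mr by auto
      also have "h w \<le> ereal (1 - t) * h p + ereal t * h u"
        using hc t unfolding convex_ext_def w_def by blast
      also have "\<dots> = ereal ((1 - t) * hp + t * b)" using hpd real by simp
      finally have "mr \<le> (1 - t) * hp + t * b" by simp
      then have "r * mr \<le> r * ((1 - t) * hp + t * b)" using rg by (intro mult_left_mono) auto
      also have "\<dots> = (r - 1) * hp + b" using rg by (simp add: t_def field_simps)
      finally show ?thesis using real by (simp add: r_def[symmetric] algebra_simps)
    qed
  qed
  define G where "G = norm (gf xt)"
  define E where "E = norm (p - xt)"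
  define B where "B = \<bar>mr - hp\<bar>"
  have qg: "q u - q p \<ge> L/2 * (norm (u - p))\<^sup>2 - norm (u - p) * (G + L * E)" for u
  proof -
    define d where "d = u - p"
    define e where "e = p - xt"
    have ue: "u - xt = d + e" by (simp add: d_def e_def)
    have "q u - q p = inner (gf xt) d + L * inner d e + L/2 * (norm d)\<^sup>2"
      unfolding q_def lin_f_def ue norm_sq_add
      by (simp add: e_def[symmetric] d_def inner_diff_right algebra_simps)
    moreover have "inner (gf xt) d \<ge> - (G * norm d)"
      using norm_cauchy_schwarz[of "- gf xt" d] by (simp add: G_def)
    moreover have "inner d e \<ge> - (norm d * E)"
      using norm_cauchy_schwarz[of "- d" e] by (simp add: E_def e_def)
    moreover have "L * inner d e \<ge> L * (- (norm d * E))"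
      using Lp calculation(3) by (intro mult_left_mono) auto
    ultimately show ?thesis
      by (simp add: d_def[symmetric] algebra_simps)
  qed
  define R where "R = 2 * (G + L * E + B) / L + 1"
  have GEB: "G \<ge> 0" "E \<ge> 0" "B \<ge> 0" by (auto simp: G_def E_def B_def)
  have R1: "R \<ge> 1" using GEB Lp by (simp add: R_def)
  obtain y where y: "y \<in> cball p R" "\<forall>u\<in>cball p R. ereal (q y) + h y \<le> ereal (q u) + h u"
    using compact_min[of "cball p R" "\<lambda>w. ereal (q w) + h w"] opF R1 by auto
  have "p \<in> cball p R" using R1 by simp
  then have yp: "ereal (q y) + h y \<le> ereal (q p + hp)" using y hpd by fastforce
  have "ereal (q y) + h y \<le> ereal (q u) + h u" for u
  proof (cases "u \<in> cball p R")
    case True then show ?thesis using y by auto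
  next
    case False
    define r where "r = norm (u - p)"
    have rR: "r > R" using False by (simp add: r_def dist_norm norm_minus_commute)
    have rpos: "r > 0" using rR R1 by simp
    have "L * r / 2 > G + L * E + B" using rR Lp by (simp add: R_def field_simps)
    then have "r * (L * r / 2) > r * (G + L * E + B)" using rpos by simp
    then have key: "L/2 * r\<^sup>2 - r * (G + L * E) - r * B > 0"
      by (simp add: power2_eq_square algebra_simps)
    have "r * (mr - hp) \<ge> r * (- B)" using rpos by (intro mult_left_mono) (auto simp: B_def)
    then have "q p + hp < q u + (hp + r * (mr - hp))"
      using key qg[of u] by (simp add: r_def)
    then have "ereal (q p + hp) < ereal (q u) + ereal (hp + r * (mr - hp))" by simp
    also have "\<dots> \<le> ereal (q u) + h u"
      using lb[of u] rR R1 by (intro add_left_mono) (auto simp: r_def)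
    finally show ?thesis using yp by simp
  qed
  then show ?thesis by (auto simp: Fq)
qed



lemma lim_small:
  fixes a b C :: real
  assumes "\<And>t. 0 < t \<Longrightarrow> t < 1 \<Longrightarrow> a \<le> b + t * C" "C \<ge> 0"
  shows "a \<le> b"
proof (rule ccontr)
  assume "\<not> a \<le> b"
  define t where "t = min (1/2) ((a - b) / (2 * (C + 1)))"
  have t: "0 < t" "t < 1" using \<open>\<not> a \<le> b\<close> assms(2) by (auto simp: t_def)
  have "t * C \<le> (a - b) / (2 * (C + 1)) * C" using assms(2) by (intro mult_right_mono) (auto simp: t_def)
  also have "\<dots> < a - b"
  proof -
    have p: "0 < (C + 2) * (a - b)" using \<open>\<not> a \<le> b\<close> assms(2) by simp
    have "C * b + b * 2 < C * a + a * 2" using p by (simp add: algebra_simps)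
    then show ?thesis using assms(2) by (simp add: field_simps)
  qed
  finally show False using assms(1)[OF t] by simp
qed

lemma prox_opt:
  fixes h :: "'a::real_inner \<Rightarrow> ereal" and f :: "'a \<Rightarrow> real"
  assumes hpr: "proper_fun h" and hc: "convex_ext h" and Lp: "L > 0"
    and ymin: "\<forall>u. prox_obj f gf h xt L y \<le> prox_obj f gf h xt L u"
  shows "L *\<^sub>R (xt - y) - gf xt \<in> subdiff h y"
proof -
  define q where "q u = lin_f f gf u xt + L/2 * (norm (u - xt))\<^sup>2" for u
  have Fq: "prox_obj f gf h xt L u = ereal (q u) + h u" for u by (simp add: prox_obj_def q_def)
  have nm: "h w \<noteq> -\<infinity>" for w using hpr by (simp add: proper_fun_def)
  obtain p where "h p < \<infinity>" using hpr by (auto simp: proper_fun_def)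
  then have "ereal (q y) + h y < \<infinity>" using ymin[rule_format, of p] Fq nm[of p]
    by (cases "h p") auto
  then obtain hy where hy: "h y = ereal hy" using nm[of y] by (cases "h y") auto
  have "h u \<ge> h y + ereal (inner (L *\<^sub>R (xt - y) - gf xt) (u - y))" for u
  proof (cases "h u")
    case PInf then show ?thesis by simp
  next
    case MInf then show ?thesis using nm by simp
  next
    case (real hu)
    define d where "d = u - y"
    define g where "g = gf xt"
    define c0 where "c0 = inner g d + L * inner (y - xt) d"
    have "hy - hu \<le> c0 + t * (L/2 * (norm d)\<^sup>2)" if t: "0 < t" "t < 1" for t
    proof -
      define z where "z = (1 - t) *\<^sub>R y + t *\<^sub>R u"
      have zd: "z = y + t *\<^sub>R d" by (simp add: z_def d_def algebra_simps)
      have hz: "h z \<le> ereal ((1 - t) * hy + t * hu)"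
      proof -
        have "h z \<le> ereal (1 - t) * h y + ereal t * h u"
          using hc t unfolding convex_ext_def z_def by blast
        then show ?thesis using hy real by simp
      qed
      then obtain hzr where hzr: "h z = ereal hzr" "hzr \<le> (1 - t) * hy + t * hu"
        using nm[of z] by (cases "h z") auto
      have "ereal (q y + hy) \<le> ereal (q z + hzr)" using ymin[rule_format, of z] Fq hy hzr by simp
      then have ineq: "q y + hy \<le> q z + (1 - t) * hy + t * hu" using hzr by simp
      have qz: "q z - q y = t * c0 + t\<^sup>2 * (L/2 * (norm d)\<^sup>2)"
      proof -
        have e: "z - xt = (y - xt) + t *\<^sub>R d" by (simp add: zd)
        have "(norm (z - xt))\<^sup>2 = (norm (y - xt))\<^sup>2 + 2 * inner (y - xt) (t *\<^sub>R d) + (norm (t *\<^sub>R d))\<^sup>2"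
          unfolding e by (rule norm_sq_add)
        then have n: "(norm (z - xt))\<^sup>2 = (norm (y - xt))\<^sup>2 + 2 * (t * inner (y - xt) d) + t\<^sup>2 * (norm d)\<^sup>2"
          by (simp add: power_mult_distrib)
        have l: "inner g (z - xt) = inner g (y - xt) + t * inner g d"
          by (simp add: zd inner_add_right inner_diff_right algebra_simps)
        have "q z - q y = (inner g (z - xt) - inner g (y - xt)) + L/2 * ((norm (z - xt))\<^sup>2 - (norm (y - xt))\<^sup>2)"
          by (simp add: q_def lin_f_def g_def algebra_simps)
        also have "\<dots> = t * inner g d + L/2 * (2 * (t * inner (y - xt) d) + t\<^sup>2 * (norm d)\<^sup>2)"
          unfolding n l by simp
        also have "\<dots> = t * c0 + t\<^sup>2 * (L/2 * (norm d)\<^sup>2)"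
          by (simp add: c0_def algebra_simps)
        finally show ?thesis .
      qed
      have "t * (hy - hu) \<le> t * (c0 + t * (L/2 * (norm d)\<^sup>2))"
        using ineq qz by (simp add: algebra_simps power2_eq_square)
      then show ?thesis using t by simp
    qed
    then have "hy - hu \<le> c0" by (intro lim_small[of "hy - hu" c0 "L/2 * (norm d)\<^sup>2"]) (use Lp in auto)
    moreover have "inner (L *\<^sub>R (xt - y) - gf xt) (u - y) = - c0"
      by (simp add: c0_def d_def g_def inner_diff_left algebra_simps)
    ultimately show ?thesis using hy real by simp
  qed
  then show ?thesis unfolding subdiff_def using hy by auto
qed



lemma acoef_facts:
  assumes "tau > 0" "A \<ge> 0" "L > 0"
  shows "acoef tau A L > 0" "L * (acoef tau A L)\<^sup>2 = tau * (A + acoef tau A L)"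
proof -
  define s where "s = sqrt (tau\<^sup>2 + 4 * tau * A * L)"
  have nn: "tau\<^sup>2 + 4 * tau * A * L \<ge> 0"
    by (intro add_nonneg_nonneg zero_le_power2 mult_nonneg_nonneg) (use assms in auto)
  have s2: "s\<^sup>2 = tau\<^sup>2 + 4 * tau * A * L" unfolding s_def by (rule real_sqrt_pow2[OF nn])
  have s0: "s \<ge> 0" using nn by (simp add: s_def)
  have a: "acoef tau A L = (tau + s) / (2 * L)" by (simp add: acoef_def s_def)
  show "acoef tau A L > 0" using assms s0 by (simp add: a)
  have "L * ((tau + s) / (2 * L))\<^sup>2 = (tau + s)\<^sup>2 / (4 * L)" using assms
    by (simp add: power2_eq_square field_simps)
  also have "\<dots> = (tau\<^sup>2 + 2 * tau * s + s\<^sup>2) / (4 * L)" by (simp add: power2_eq_square algebra_simps)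
  also have "\<dots> = tau * (A + (tau + s) / (2 * L))" using assms unfolding s2
    by (simp add: field_simps power2_eq_square)
  finally show "L * (acoef tau A L)\<^sup>2 = tau * (A + acoef tau A L)" by (simp add: a)
qed

lemma step_sqrt:
  fixes A' a L tau :: real
  assumes "A' \<ge> 0" "a > 0" "L > 0" "tau \<ge> 1" "L * a\<^sup>2 = tau * (A' + a)"
  shows "2 * sqrt L * (sqrt (A' + a) - sqrt A') \<ge> 1"
proof -
  define \<alpha> where "\<alpha> = sqrt (A' + a)"
  define \<beta> where "\<beta> = sqrt A'"
  have a2: "\<alpha>\<^sup>2 = A' + a" "\<beta>\<^sup>2 = A'"
    using assms(1,2) unfolding \<alpha>_def \<beta>_def by (simp_all add: add_nonneg_nonneg)
  have b0: "\<beta> \<ge> 0" using assms(1) by (simp add: \<beta>_def)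
  have ab: "\<alpha> \<ge> \<beta>" using assms(1,2) by (simp add: \<alpha>_def \<beta>_def)
  have apos: "\<alpha> > 0" using assms by (simp add: \<alpha>_def)
  have aeq: "a = (\<alpha> - \<beta>) * (\<alpha> + \<beta>)" using a2 by (simp add: algebra_simps power2_eq_square)
  have "a \<le> (\<alpha> - \<beta>) * (2 * \<alpha>)" unfolding aeq using ab b0 by (intro mult_left_mono) auto
  then have "a\<^sup>2 \<le> ((\<alpha> - \<beta>) * (2 * \<alpha>))\<^sup>2" using assms(2) by (intro power_mono) auto
  then have "L * a\<^sup>2 \<le> L * ((\<alpha> - \<beta>) * (2 * \<alpha>))\<^sup>2" using assms(3) by simp
  moreover have "L * a\<^sup>2 \<ge> \<alpha>\<^sup>2" using assms a2 by (simp add: mult_right_mono)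
  moreover have "L * ((\<alpha> - \<beta>) * (2 * \<alpha>))\<^sup>2 = \<alpha>\<^sup>2 * (4 * L * (\<alpha> - \<beta>)\<^sup>2)"
    by (simp add: power2_eq_square algebra_simps)
  ultimately have "\<alpha>\<^sup>2 * 1 \<le> \<alpha>\<^sup>2 * (4 * L * (\<alpha> - \<beta>)\<^sup>2)" by linarith
  then have "1 \<le> 4 * L * (\<alpha> - \<beta>)\<^sup>2" using apos by (simp add: mult_le_cancel_left)
  also have "\<dots> = (2 * sqrt L * (\<alpha> - \<beta>))\<^sup>2" using assms(3) by (simp add: power_mult_distrib)
  finally have "1 \<le> (2 * sqrt L * (\<alpha> - \<beta>))\<^sup>2" .
  moreover have "2 * sqrt L * (\<alpha> - \<beta>) \<ge> 0" using ab assms(3) by simp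
  ultimately have "1 \<le> 2 * sqrt L * (\<alpha> - \<beta>)"
    using power2_le_imp_le[of 1 "2 * sqrt L * (\<alpha> - \<beta>)"] by simp
  then show ?thesis unfolding \<alpha>_def \<beta>_def .
qed

lemma step_geo:
  fixes A' a L tau mu q :: real
  assumes "A' \<ge> 0" "a > 0" "L > 0" "mu > 0" "tau = 1 + mu * A' / 2" "L * a\<^sup>2 = tau * (A' + a)"
    and q: "q \<ge> 0" "q\<^sup>2 \<le> mu / (8 * L)"
  shows "sqrt (A' + a) \<ge> (1 + q) * sqrt A'"
proof -
  define \<alpha> where "\<alpha> = sqrt (A' + a)"
  define \<beta> where "\<beta> = sqrt A'"
  have a2: "\<alpha>\<^sup>2 = A' + a" "\<beta>\<^sup>2 = A'"
    using assms(1,2) unfolding \<alpha>_def \<beta>_def by (simp_all add: add_nonneg_nonneg)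
  have b0: "\<beta> \<ge> 0" using assms(1) by (simp add: \<beta>_def)
  have ab: "\<alpha> \<ge> \<beta>" using assms(1,2) by (simp add: \<alpha>_def \<beta>_def)
  have apos: "\<alpha> > 0" using assms by (simp add: \<alpha>_def)
  have aeq: "a = (\<alpha> - \<beta>) * (\<alpha> + \<beta>)" using a2 by (simp add: algebra_simps power2_eq_square)
  have "a \<le> (\<alpha> - \<beta>) * (2 * \<alpha>)" unfolding aeq using ab b0 by (intro mult_left_mono) auto
  then have "a\<^sup>2 \<le> ((\<alpha> - \<beta>) * (2 * \<alpha>))\<^sup>2" using assms(2) by (intro power_mono) auto
  then have "L * a\<^sup>2 \<le> L * ((\<alpha> - \<beta>) * (2 * \<alpha>))\<^sup>2" using assms(3) by simp
  moreover have "L * a\<^sup>2 \<ge> (mu / 2 * \<beta>\<^sup>2) * \<alpha>\<^sup>2"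
  proof -
    have "tau \<ge> mu / 2 * \<beta>\<^sup>2" using assms a2 by simp
    then have "tau * \<alpha>\<^sup>2 \<ge> (mu / 2 * \<beta>\<^sup>2) * \<alpha>\<^sup>2" by (intro mult_right_mono) auto
    then show ?thesis using assms(6) a2 by simp
  qed
  moreover have "L * ((\<alpha> - \<beta>) * (2 * \<alpha>))\<^sup>2 = \<alpha>\<^sup>2 * (4 * L * (\<alpha> - \<beta>)\<^sup>2)"
    by (simp add: power2_eq_square algebra_simps)
  moreover have "(mu / 2 * \<beta>\<^sup>2) * \<alpha>\<^sup>2 = \<alpha>\<^sup>2 * (mu / 2 * \<beta>\<^sup>2)" by simp
  ultimately have "\<alpha>\<^sup>2 * (mu / 2 * \<beta>\<^sup>2) \<le> \<alpha>\<^sup>2 * (4 * L * (\<alpha> - \<beta>)\<^sup>2)" by linarith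
  then have "mu / 2 * \<beta>\<^sup>2 \<le> 4 * L * (\<alpha> - \<beta>)\<^sup>2" using apos by (simp add: mult_le_cancel_left)
  then have "mu / (8 * L) * \<beta>\<^sup>2 \<le> (\<alpha> - \<beta>)\<^sup>2" using assms(3) by (simp add: field_simps)
  moreover have "q\<^sup>2 * \<beta>\<^sup>2 \<le> mu / (8 * L) * \<beta>\<^sup>2" using q by (intro mult_right_mono) auto
  moreover have "(q * \<beta>)\<^sup>2 = q\<^sup>2 * \<beta>\<^sup>2" by (simp add: power_mult_distrib)
  ultimately have "(q * \<beta>)\<^sup>2 \<le> (\<alpha> - \<beta>)\<^sup>2" by linarith
  moreover have "0 \<le> \<alpha> - \<beta>" using ab by linarith
  ultimately have "q * \<beta> \<le> \<alpha> - \<beta>" by (rule power2_le_imp_le)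
  moreover have "(1 + q) * \<beta> = \<beta> + q * \<beta>" by (simp add: algebra_simps)
  ultimately have "(1 + q) * \<beta> \<le> \<alpha>" by linarith
  then show ?thesis unfolding \<alpha>_def \<beta>_def .
qed

lemma L_step:
  fixes Lprev Lj beta chi Lbar :: real
  assumes Lp: "Lprev > 0" and b: "beta > 1" and chi: "0 < chi" "chi < 1"
    and Lj: "Lj = beta ^ k * Lprev" and fail: "\<forall>i<k. \<not> P (beta ^ i * Lprev)"
    and big: "\<And>M. M \<ge> 2 * Lbar / (1 - chi) \<Longrightarrow> P M"
  shows "Lprev \<le> Lj" "Lj \<le> max Lprev (2 * beta / (1 - chi) * Lbar)"
proof -
  have "1 \<le> beta ^ k" using b by simp
  then show "Lprev \<le> Lj" using Lp Lj by (simp add: mult_le_cancel_right1)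
  show "Lj \<le> max Lprev (2 * beta / (1 - chi) * Lbar)"
  proof (cases k)
    case 0 then show ?thesis using Lj by simp
  next
    case (Suc k')
    then have "\<not> P (beta ^ k' * Lprev)" using fail by auto
    then have "beta ^ k' * Lprev < 2 * Lbar / (1 - chi)" using big by (meson not_le)
    then have "beta * (beta ^ k' * Lprev) < beta * (2 * Lbar / (1 - chi))" using b by (intro mult_strict_left_mono) auto
    moreover have "beta * (2 * Lbar / (1 - chi)) = 2 * beta / (1 - chi) * Lbar" by simp
    moreover have "Lj = beta * (beta ^ k' * Lprev)" using Lj Suc by simp
    ultimately show ?thesis by linarith
  qed
qed



theorem lemma2p3:
  fixes f :: "'a::euclidean_space \<Rightarrow> real" and gf :: "'a \<Rightarrow> 'a"
    and h :: "'a \<Rightarrow> ereal"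
    and Lbar mubar chi beta epshat mu Mlow :: real
    and x0 :: 'a and J :: nat
    and L a A tau :: "nat \<Rightarrow> real"
    and x y xt xi s v :: "nat \<Rightarrow> 'a"
  assumes f_conv: "convex_on UNIV f"
    and f_grad: "\<And>z. (f has_derivative (\<lambda>d. inner (gf z) d)) (at z)"
    and f_lip: "\<And>z z'. norm (gf z' - gf z) \<le> Lbar * norm (z' - z)"
    and Lbar_nn: "Lbar \<ge> 0"
    and h_proper: "proper_fun h" and h_lsc: "lsc_fun h" and h_conv: "convex_ext h"
    and mubar_pos: "mubar > 0"
    and phi_sc: "strongly_convex_ext mubar (\<lambda>u. ereal (f u) + h u)"
    and chi: "0 < chi" "chi < 1" and beta: "beta > 1" and epshat: "epshat > 0"
    and mu_pos: "mu > 0" and Mlow_pos: "Mlow > 0"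
    and x0_dom: "x0 \<in> dom_fun h"
    (* initialization of the cycle *)
    and init: "x 0 = x0" "y 0 = x0" "xi 0 = x0" "A 0 = 0" "tau 0 = 1" "L 0 = Mlow"
    (* steps (i)-(ii): backtracking line search, L j = beta^k L (j-1) with k minimal *)
    and ls: "\<And>j. 1 \<le> j \<Longrightarrow> j \<le> J \<Longrightarrow> \<exists>k::nat. L j = beta ^ k * L (j - 1)
              \<and> ls_ok f gf h chi (tau (j - 1)) (A (j - 1)) (x (j - 1)) (y (j - 1)) (beta ^ k * L (j - 1))
              \<and> (\<forall>i<k. \<not> ls_ok f gf h chi (tau (j - 1)) (A (j - 1)) (x (j - 1)) (y (j - 1)) (beta ^ i * L (j - 1)))"
    and a_def: "\<And>j. 1 \<le> j \<Longrightarrow> j \<le> J \<Longrightarrow> a (j - 1) = acoef (tau (j - 1)) (A (j - 1)) (L j)"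
    and xt_def: "\<And>j. 1 \<le> j \<Longrightarrow> j \<le> J \<Longrightarrow> xt (j - 1) = xtil (A (j - 1)) (y (j - 1)) (a (j - 1)) (x (j - 1))"
    and y_def: "\<And>j. 1 \<le> j \<Longrightarrow> j \<le> J \<Longrightarrow> y j = prox_pt f gf h (xt (j - 1)) (L j)"
    (* step (iii) *)
    and xi_def: "\<And>j. 1 \<le> j \<Longrightarrow> j \<le> J \<Longrightarrow>
              xi j = (if ereal (f (y j)) + h (y j) \<le> ereal (f (xi (j - 1))) + h (xi (j - 1)) then y j else xi (j - 1))"
    and A_def: "\<And>j. 1 \<le> j \<Longrightarrow> j \<le> J \<Longrightarrow> A j = A (j - 1) + a (j - 1)"
    and tau_def: "\<And>j. 1 \<le> j \<Longrightarrow> j \<le> J \<Longrightarrow> tau j = tau (j - 1) + a (j - 1) * mu / 2"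
    and s_def: "\<And>j. 1 \<le> j \<Longrightarrow> j \<le> J \<Longrightarrow> s j = L j *\<^sub>R (xt (j - 1) - y j)"
    and x_def: "\<And>j. 1 \<le> j \<Longrightarrow> j \<le> J \<Longrightarrow>
              x j = (1 / tau j) *\<^sub>R ((mu * a (j - 1) / 2) *\<^sub>R y j + tau (j - 1) *\<^sub>R x (j - 1) - a (j - 1) *\<^sub>R s j)"
    and v_def: "\<And>j. 1 \<le> j \<Longrightarrow> j \<le> J \<Longrightarrow> v j = gf (y j) - gf (xt (j - 1)) + s j"
    (* steps (iv)-(v): iterations before J neither restart nor stop *)
    and no_restart: "\<And>j. 1 \<le> j \<Longrightarrow> j < J \<Longrightarrow>
              \<not> ((norm (xi j - x0))\<^sup>2 < chi * A j * L j * (norm (y j - xt (j - 1)))\<^sup>2)"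
    and no_stop: "\<And>j. 1 \<le> j \<Longrightarrow> j < J \<Longrightarrow> norm (v j) > epshat"
  shows "\<forall>j. 1 \<le> j \<and> j \<le> J \<longrightarrow>
      (let kappa = 2 * beta / (1 - chi);
           zeta = Lbar + max Mlow (kappa * Lbar);
           Q = 2 * sqrt 2 * sqrt (max Mlow (kappa * Lbar) / mu)
       in L (j - 1) \<le> L j
        \<and> tau (j - 1) = 1 + mu * A (j - 1) / 2
        \<and> tau (j - 1) * A j / (a (j - 1))\<^sup>2 = L j
        \<and> Mlow \<le> L (j - 1) \<and> L (j - 1) \<le> max Mlow (kappa * Lbar)
        \<and> v j \<in> {gf (y j) + g | g. g \<in> subdiff h (y j)}
        \<and> norm (v j) \<le> zeta * norm (y j - xt (j - 1))
        \<and> A j * L j \<ge> max (real j ^ 2 / 4) ((1 + 1 / Q) ^ (2 * (j - 1))))"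
proof -
  define M where "M = max Mlow (2 * beta / (1 - chi) * Lbar)"
  have Mpos: "M > 0" using Mlow_pos by (simp add: M_def)
  have big: "ls_ok f gf h chi t AA xx yy Mv" if "Mv \<ge> 2 * Lbar / (1 - chi)" for t AA xx yy Mv
  proof -
    define xtt where "xtt = xtil AA yy (acoef t AA Mv) xx"
    define yv where "yv = prox_pt f gf h xtt Mv"
    have d: "f yv \<le> f xtt + inner (gf xtt) (yv - xtt) + Lbar / 2 * (norm (yv - xtt))\<^sup>2"
      by (rule descent[OF f_grad f_lip])
    have "Lbar / 2 \<le> (1 - chi) * Mv / 4"
      using that chi by (simp add: field_simps)
    then have "Lbar / 2 * (norm (yv - xtt))\<^sup>2 \<le> (1 - chi) * Mv / 4 * (norm (yv - xtt))\<^sup>2"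
      by (intro mult_right_mono) auto
    then show ?thesis using d unfolding ls_ok_def Let_def lin_f_def xtt_def[symmetric] yv_def[symmetric]
      by linarith
  qed
  have LS: "L (j - 1) \<le> L j \<and> L j \<le> max (L (j - 1)) (2 * beta / (1 - chi) * Lbar)"
    if j: "1 \<le> j" "j \<le> J" "L (j - 1) > 0" for j
  proof -
    obtain k where k: "L j = beta ^ k * L (j - 1)"
      "\<forall>i<k. \<not> ls_ok f gf h chi (tau (j - 1)) (A (j - 1)) (x (j - 1)) (y (j - 1)) (beta ^ i * L (j - 1))"
      using ls[OF j(1,2)] by blast
    show ?thesis
      using L_step[OF j(3) beta chi k(1) k(2), where Lbar = Lbar] big by blast
  qed
  have Lfacts: "0 < L j \<and> Mlow \<le> L j \<and> L j \<le> M" if "j \<le> J" for j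
    using that
  proof (induction j)
    case 0 then show ?case using init Mlow_pos by (simp add: M_def)
  next
    case (Suc n)
    then have IH: "0 < L n \<and> Mlow \<le> L n \<and> L n \<le> M" by simp
    have "L n \<le> L (Suc n) \<and> L (Suc n) \<le> max (L n) (2 * beta / (1 - chi) * Lbar)"
      using LS[of "Suc n"] Suc.prems IH by simp
    then show ?case using IH by (auto simp: M_def)
  qed
  have Lmono: "L (j - 1) \<le> L j" if "1 \<le> j" "j \<le> J" for j
    using LS[OF that] Lfacts[of "j - 1"] that by auto
  have TA: "tau j = 1 + mu * A j / 2 \<and> A j \<ge> 0" if "j \<le> J" for j
    using that
  proof (induction j)
    case 0 then show ?case using init by simp
  next
    case (Suc n)
    then have IH: "tau n = 1 + mu * A n / 2 \<and> A n \<ge> 0" by simp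
    have tp: "tau n > 0" using IH mu_pos by (simp add: add_pos_nonneg)
    have "a n > 0" using a_def[of "Suc n"] Suc.prems acoef_facts(1)[OF tp, of "A n" "L (Suc n)"] IH Lfacts[of "Suc n"]
      by simp
    then show ?case using IH tau_def[of "Suc n"] A_def[of "Suc n"] Suc.prems by (simp add: algebra_simps)
  qed
  have AF: "a (j - 1) > 0 \<and> L j * (a (j - 1))\<^sup>2 = tau (j - 1) * A j \<and> tau (j - 1) \<ge> 1"
    if j: "1 \<le> j" "j \<le> J" for j
  proof -
    have IH: "tau (j - 1) = 1 + mu * A (j - 1) / 2 \<and> A (j - 1) \<ge> 0" using TA[of "j - 1"] j by simp
    have tp: "tau (j - 1) > 0" using IH mu_pos by (simp add: add_pos_nonneg)
    have t1: "tau (j - 1) \<ge> 1" using IH mu_pos by simp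
    have Lp: "L j > 0" using Lfacts j by simp
    show ?thesis using acoef_facts[OF tp _ Lp, of "A (j - 1)"] IH a_def[OF j] A_def[OF j] t1 by simp
  qed
  have SQ: "2 * sqrt (A j) * sqrt (L j) \<ge> real j" if "j \<le> J" for j
    using that
  proof (induction j)
    case 0 then show ?case using init by simp
  next
    case (Suc n)
    then have IH: "2 * sqrt (A n) * sqrt (L n) \<ge> real n" by simp
    have j: "1 \<le> Suc n" "Suc n \<le> J" using Suc.prems by auto
    have AF': "a n > 0 \<and> L (Suc n) * (a n)\<^sup>2 = tau n * A (Suc n) \<and> tau n \<ge> 1" using AF[OF j] by simp
    have An: "A n \<ge> 0" using TA[of n] j by simp
    have As: "A (Suc n) = A n + a n" using A_def[OF j] by simp
    have Lp: "L (Suc n) > 0" using Lfacts j by simp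
    have st: "2 * sqrt (L (Suc n)) * (sqrt (A n + a n) - sqrt (A n)) \<ge> 1"
      using step_sqrt[OF An _ Lp _ , of "a n" "tau n"] AF' As by simp
    have "sqrt (L n) \<le> sqrt (L (Suc n))" using Lmono[OF j] by simp
    then have "2 * sqrt (A n) * sqrt (L n) \<le> 2 * sqrt (A n) * sqrt (L (Suc n))"
      using An by (intro mult_left_mono) auto
    then have "real n \<le> 2 * sqrt (A n) * sqrt (L (Suc n))" using IH by linarith
    then show ?case using st As by (simp add: algebra_simps)
  qed
  have L1: "L 1 \<le> L j" if "1 \<le> j" "j \<le> J" for j
    using that
  proof (induction j rule: dec_induct)
    case base then show ?case by simp
  next
    case (step n)
    then show ?case using Lmono[of "Suc n"] by simp
  qed
  define Q where "Q = 2 * sqrt 2 * sqrt (M / mu)"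
  define q where "q = 1 / Q"
  have Qpos: "Q > 0" using Mpos mu_pos by (simp add: Q_def)
  have q0: "q \<ge> 0" using Qpos by (simp add: q_def)
  have q2: "q\<^sup>2 = mu / (8 * M)"
  proof -
    have "Q\<^sup>2 = 8 * (M / mu)" using Mpos mu_pos by (simp add: Q_def power_mult_distrib)
    then show ?thesis using Mpos mu_pos Qpos by (simp add: q_def power_one_over field_simps)
  qed
  have qL: "q\<^sup>2 \<le> mu / (8 * L j)" if "j \<le> J" for j
    unfolding q2 using Lfacts[OF that] Mpos mu_pos by (intro divide_left_mono) auto
  have GEO: "sqrt (A j) \<ge> (1 + q) ^ (j - 1) * sqrt (A 1)" if "1 \<le> j" "j \<le> J" for j
    using that
  proof (induction j rule: dec_induct)
    case base then show ?case by simp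
  next
    case (step n)
    have j: "1 \<le> Suc n" "Suc n \<le> J" using step by auto
    have AF': "a n > 0 \<and> L (Suc n) * (a n)\<^sup>2 = tau n * A (Suc n)" using AF[OF j] by simp
    have An: "A n \<ge> 0" and tn: "tau n = 1 + mu * A n / 2" using TA[of n] j by auto
    have As: "A (Suc n) = A n + a n" using A_def[OF j] by simp
    have Lp: "L (Suc n) > 0" using Lfacts j by simp
    have st: "sqrt (A n + a n) \<ge> (1 + q) * sqrt (A n)"
      using step_geo[OF An _ Lp mu_pos tn _ q0 qL[OF j(2)]] AF' As by simp
    have "(1 + q) ^ (Suc n - 1) * sqrt (A 1) = (1 + q) * ((1 + q) ^ (n - 1) * sqrt (A 1))"
      using step(1) by (cases n) auto
    also have "\<dots> \<le> (1 + q) * sqrt (A n)" using step q0 by (intro mult_left_mono) auto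
    finally show ?case using st As by simp
  qed
  show ?thesis
  proof (intro allI impI)
    fix j assume jj: "1 \<le> j \<and> j \<le> J"
    then have j: "1 \<le> j" "j \<le> J" by auto
    have IH: "tau (j - 1) = 1 + mu * A (j - 1) / 2" using TA[of "j - 1"] j by simp
    have AF': "a (j - 1) > 0 \<and> L j * (a (j - 1))\<^sup>2 = tau (j - 1) * A j" using AF[OF j] by simp
    have Lj: "0 < L j \<and> Mlow \<le> L j \<and> L j \<le> M" using Lfacts j by simp
    have Ljm: "0 < L (j - 1) \<and> Mlow \<le> L (j - 1) \<and> L (j - 1) \<le> M" using Lfacts j by simp
    have c2: "tau (j - 1) * A j / (a (j - 1))\<^sup>2 = L j" using AF' by (simp add: field_simps)
    have ex: "\<exists>yy. \<forall>u. prox_obj f gf h (xt (j - 1)) (L j) yy \<le> prox_obj f gf h (xt (j - 1)) (L j) u"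
      by (rule prox_exists[OF h_proper h_lsc h_conv]) (use Lj in simp)
    have ymin: "\<forall>u. prox_obj f gf h (xt (j - 1)) (L j) (y j) \<le> prox_obj f gf h (xt (j - 1)) (L j) u"
      unfolding y_def[OF j] prox_pt_def by (rule someI_ex[OF ex])
    have sd: "L j *\<^sub>R (xt (j - 1) - y j) - gf (xt (j - 1)) \<in> subdiff h (y j)"
      by (rule prox_opt[OF h_proper h_conv _ ymin]) (use Lj in simp)
    have vj: "v j = gf (y j) + (L j *\<^sub>R (xt (j - 1) - y j) - gf (xt (j - 1)))"
      using v_def[OF j] s_def[OF j] by (simp add: algebra_simps)
    have c4: "v j \<in> {gf (y j) + g | g. g \<in> subdiff h (y j)}" using sd vj by blast
    have "norm (v j) \<le> norm (gf (y j) - gf (xt (j - 1))) + norm (s j)"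
      using v_def[OF j] norm_triangle_ineq by simp
    also have "\<dots> \<le> Lbar * norm (y j - xt (j - 1)) + L j * norm (y j - xt (j - 1))"
      using f_lip[of "xt (j - 1)" "y j"] s_def[OF j] Lj by (simp add: norm_minus_commute)
    also have "\<dots> \<le> (Lbar + M) * norm (y j - xt (j - 1))"
      using Lj by (simp add: algebra_simps mult_right_mono)
    finally have c5: "norm (v j) \<le> (Lbar + M) * norm (y j - xt (j - 1))" .
    have sq: "(real j)\<^sup>2 \<le> (2 * sqrt (A j) * sqrt (L j))\<^sup>2"
      using SQ[OF j(2)] by (intro power_mono) auto
    have Aj0: "A j \<ge> 0" using TA[OF j(2)] by simp
    have "(2 * sqrt (A j) * sqrt (L j))\<^sup>2 = 4 * (A j * L j)"
      using Aj0 Lj by (simp add: power_mult_distrib)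
    then have g1: "real j ^ 2 / 4 \<le> A j * L j" using sq by simp
    have L1p: "L 1 > 0" using Lfacts[of 1] j by simp
    have A1: "A 1 = 1 / L 1"
    proof -
      have "a 0 = acoef 1 0 (L 1)" using a_def[of 1] j init by simp
      then have "a 0 = 1 / L 1" using Lfacts[of 1] j by (simp add: acoef_def)
      then show ?thesis using A_def[of 1] j init by simp
    qed
    have "((1 + q) ^ (j - 1) * sqrt (A 1))\<^sup>2 \<le> (sqrt (A j))\<^sup>2"
      using GEO[OF j] q0 A1 L1p by (intro power_mono) auto
    then have "(1 + q) ^ (2 * (j - 1)) * (1 / L 1) \<le> A j"
      using Aj0 A1 L1p by (simp add: power_mult_distrib power_mult[symmetric] mult.commute)
    then have "(1 + q) ^ (2 * (j - 1)) * (1 / L 1) * L j \<le> A j * L j"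
      using Lj by (intro mult_right_mono) auto
    moreover have "(1 + q) ^ (2 * (j - 1)) \<le> (1 + q) ^ (2 * (j - 1)) * (1 / L 1) * L j"
    proof -
      have "1 \<le> L j / L 1" using L1[OF j] L1p by simp
      moreover have "(1 + q) ^ (2 * (j - 1)) \<ge> 0" using q0 by simp
      ultimately have "(1 + q) ^ (2 * (j - 1)) * 1 \<le> (1 + q) ^ (2 * (j - 1)) * (L j / L 1)"
        by (intro mult_left_mono) auto
      then show ?thesis by simp
    qed
    ultimately have g2: "(1 + q) ^ (2 * (j - 1)) \<le> A j * L j" by linarith
    show "let kappa = 2 * beta / (1 - chi);
           zeta = Lbar + max Mlow (kappa * Lbar);
           Q = 2 * sqrt 2 * sqrt (max Mlow (kappa * Lbar) / mu)
       in L (j - 1) \<le> L j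
        \<and> tau (j - 1) = 1 + mu * A (j - 1) / 2
        \<and> tau (j - 1) * A j / (a (j - 1))\<^sup>2 = L j
        \<and> Mlow \<le> L (j - 1) \<and> L (j - 1) \<le> max Mlow (kappa * Lbar)
        \<and> v j \<in> {gf (y j) + g | g. g \<in> subdiff h (y j)}
        \<and> norm (v j) \<le> zeta * norm (y j - xt (j - 1))
        \<and> A j * L j \<ge> max (real j ^ 2 / 4) ((1 + 1 / Q) ^ (2 * (j - 1)))"
      unfolding Let_def M_def[symmetric] Q_def[symmetric] q_def[symmetric]
      using Lmono[OF j] IH c2 Ljm c4 c5 g1 g2 by simp
  qed
qed

end
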